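(* A superreduced walk with excess $\xi$ has length at most $4\xi$ and spans a tree with at most $\xi+1$ vertices. Consequently its generating function $S_\xi(v,z)$ is a polynomial of degree $\xi+1$ in $v$ and $2\xi$ in $z$.
   Context: A tree walk of size $m$ and length $L$ is a sequence $W=(v_1,\dots,v_L)$ of elements of $[m]$ in which every element of $[m]$ occurs, such that the graph with vertex set $[m]$ and edges $\{v_j,v_{j+1}\}$ ($1\le j<L$) and $\{v_L,v_1\}$ is a tree; $W$ is the closed walk $v_1\to\dots\to v_L\to v_1$. Each edge is traversed $2k$ times ($k\ge1$); its excess is $k-1$; it is simple if $k=1$. The excess of $W$ is the sum of the edge excesses, i.e. $\ell-(m-1)$ for length $2\ell$ and size $m$. A superreduced walk is a tree walk with no simple edge (the one-vertex walk of length $0$ included). With $s_{m,2\ell}$ the number of superreduced walks of size $m$ and length $2\ell$, $S_\xi(v,z)=\sum_{\ell,m:\,\ell-m+1=\xi}s_{m,2\ell}\frac{v^m}{m!}z^\ell$. *)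

theory Defs
  imports "HOL-Computational_Algebra.Computational_Algebra"
begin

text \<open>A walk is a list of vertices v_1 ... v_L. Its (cyclic) steps are
  {v_j, v_(j+1)} for j < L and {v_L, v_1}.\<close>

definition step_edge :: "nat list \<Rightarrow> nat \<Rightarrow> nat set" where
  "step_edge W j = {W ! j, W ! (Suc j mod length W)}"

definition walk_edges :: "nat list \<Rightarrow> nat set set" where
  "walk_edges W = step_edge W ` {..<length W}"

definition traversals :: "nat list \<Rightarrow> nat set \<Rightarrow> nat" where
  "traversals W e = card {j. j < length W \<and> step_edge W j = e}"

definition is_tree :: "nat set \<Rightarrow> nat set set \<Rightarrow> bool" where
  "is_tree V E \<longleftrightarrow> finite V \<and> V \<noteq> {} \<and>
     (\<forall>e\<in>E. e \<subseteq> V \<and> card e = 2) \<and>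
     (\<forall>x\<in>V. \<forall>y\<in>V. (x, y) \<in> {(a, b). {a, b} \<in> E}\<^sup>*) \<and>
     card E = card V - 1"

text \<open>Tree walks of size m, vertices in [m] = {1..m}. The one-vertex walk of
  length 0 is represented by the empty list (with m = 1).\<close>
definition tree_walk :: "nat \<Rightarrow> nat list \<Rightarrow> bool" where
  "tree_walk m W \<longleftrightarrow> (W = [] \<and> m = 1) \<or>
     (W \<noteq> [] \<and> set W = {1..m} \<and> is_tree {1..m} (walk_edges W))"

definition walk_excess :: "nat list \<Rightarrow> nat" where
  "walk_excess W = (\<Sum>e\<in>walk_edges W. traversals W e div 2 - 1)"

definition simple_edge :: "nat list \<Rightarrow> nat set \<Rightarrow> bool" where
  "simple_edge W e \<longleftrightarrow> e \<in> walk_edges W \<and> traversals W e = 2"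

definition superreduced :: "nat \<Rightarrow> nat list \<Rightarrow> bool" where
  "superreduced m W \<longleftrightarrow> tree_walk m W \<and> (\<forall>e. \<not> simple_edge W e)"

definition s_count :: "nat \<Rightarrow> nat \<Rightarrow> nat" where
  "s_count m L = card {W. superreduced m W \<and> length W = L}"

text \<open>S_xi(v,z) = sum over l, m with l - m + 1 = xi of s_{m,2l} v^m/m! z^l,
  as a formal power series in z whose coefficients are polynomials in v.
  For fixed l the only m is m = l + 1 - xi (requires xi \<le> l + 1).\<close>
definition S_gf :: "nat \<Rightarrow> real poly fps" where
  "S_gf \<xi> = Abs_fps (\<lambda>l. if \<xi> \<le> l + 1
       then monom (real (s_count (l + 1 - \<xi>) (2 * l)) / fact (l + 1 - \<xi>)) (l + 1 - \<xi>)
       else 0)"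

end

theory Submission
  imports Defs
begin


definition erel :: "nat set set \<Rightarrow> (nat \<times> nat) set" where
  "erel E = {(a, b). {a, b} \<in> E}"

definition cls :: "nat set set \<Rightarrow> nat \<Rightarrow> nat set" where
  "cls E x = {y. (x, y) \<in> (erel E)\<^sup>*}"

lemma sym_erel: "sym (erel E)"
  by (auto simp: erel_def sym_def insert_commute)

lemma rt_sym: "(x, y) \<in> (erel E)\<^sup>* \<Longrightarrow> (y, x) \<in> (erel E)\<^sup>*"
  using sym_rtrancl[OF sym_erel] by (auto simp: sym_def)

lemma comp_eq:
  assumes xy: "(x, y) \<in> (erel E)\<^sup>*"
  shows "cls E x = cls E y"
proof
  show "cls E x \<subseteq> cls E y"
  proof
    fix z assume "z \<in> cls E x"
    hence "(x, z) \<in> (erel E)\<^sup>*" by (simp add: cls_def)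
    with rt_sym[OF xy] have "(y, z) \<in> (erel E)\<^sup>*" by (rule rtrancl_trans)
    thus "z \<in> cls E y" by (simp add: cls_def)
  qed
  show "cls E y \<subseteq> cls E x"
  proof
    fix z assume "z \<in> cls E y"
    hence "(y, z) \<in> (erel E)\<^sup>*" by (simp add: cls_def)
    with xy have "(x, z) \<in> (erel E)\<^sup>*" by (rule rtrancl_trans)
    thus "z \<in> cls E x" by (simp add: cls_def)
  qed
qed

lemma mem_cls: "y \<in> cls E x \<Longrightarrow> cls E x = cls E y"
  by (rule comp_eq) (simp add: cls_def)

lemma comp_self: "x \<in> cls E x"
  by (simp add: cls_def)

lemma comp_insert_same:
  assumes "a \<notin> cls E x" "b \<notin> cls E x"
  shows "cls (insert {a, b} E) x = cls E x"
proof
  have "erel E \<subseteq> erel (insert {a, b} E)" by (auto simp: erel_def)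
  then show "cls E x \<subseteq> cls (insert {a, b} E) x"
    unfolding cls_def using rtrancl_mono by blast
  show "cls (insert {a, b} E) x \<subseteq> cls E x"
  proof
    fix y assume "y \<in> cls (insert {a, b} E) x"
    hence "(x, y) \<in> (erel (insert {a, b} E))\<^sup>*" by (simp add: cls_def)
    thus "y \<in> cls E x"
    proof (induction rule: rtrancl_induct)
      case base then show ?case by (simp add: comp_self)
    next
      case (step y z)
      show ?case
      proof (cases "{y, z} = {a, b}")
        case True
        hence "y = a \<or> y = b" by (auto simp: doubleton_eq_iff)
        then show ?thesis using step assms by auto
      next
        case False
        hence "(y, z) \<in> erel E" using step(2) by (auto simp: erel_def)
        thus ?thesis using step(3) unfolding cls_def by auto
      qed
    qed
  qed
qed

lemma comp_count:
  assumes "finite E" "finite V"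
  shows "(\<forall>e\<in>E. e \<subseteq> V \<and> card e = 2) \<Longrightarrow> card V \<le> card (cls E ` V) + card E"
  using assms(1)
proof (induction E rule: finite_induct)
  case empty
  have "cls {} x = {x}" for x
    unfolding cls_def erel_def by auto
  hence "inj_on (cls {}) V" by (auto simp: inj_on_def)
  then show ?case by (simp add: card_image)
next
  case (insert e E)
  from insert.prems have e: "e \<subseteq> V" "card e = 2" by auto
  then obtain a b where ab: "e = {a, b}" "a \<noteq> b" by (auto simp: card_2_iff)
  have aV: "a \<in> V" "b \<in> V" using e ab by auto
  have IH: "card V \<le> card (cls E ` V) + card E" using insert by auto
  let ?S = "cls E ` V" and ?S' = "cls (insert e E) ` V"
  have sub: "(?S - {cls E a, cls E b}) \<union> {cls (insert e E) a} \<subseteq> ?S'"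
  proof -
    have "C \<in> ?S'" if CC: "C \<in> ?S" "C \<noteq> cls E a" "C \<noteq> cls E b" for C
    proof -
      obtain x where x: "x \<in> V" "C = cls E x" using CC by auto
      have "a \<notin> cls E x" using mem_cls[of a E x] x CC by auto
      moreover have "b \<notin> cls E x" using mem_cls[of b E x] x CC by auto
      ultimately have "cls (insert e E) x = cls E x" using ab comp_insert_same by simp
      thus ?thesis using x by auto
    qed
    thus ?thesis using aV by auto
  qed
  have notin: "cls (insert e E) a \<notin> ?S - {cls E a, cls E b}"
  proof
    assume "cls (insert e E) a \<in> ?S - {cls E a, cls E b}"
    then obtain x where x: "x \<in> V" "cls (insert e E) a = cls E x" "cls E x \<noteq> cls E a" by auto
    have "a \<in> cls E x" using x comp_self by metis
    hence "cls E x = cls E a" by (rule mem_cls)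
    thus False using x by simp
  qed
  have fS: "finite ?S" "finite ?S'" using assms by auto
  have "card ?S \<le> card ((?S - {cls E a, cls E b}) \<union> {cls E a, cls E b})"
    by (rule card_mono) (use fS in auto)
  also have "\<dots> \<le> card (?S - {cls E a, cls E b}) + card {cls E a, cls E b}" by (rule card_Un_le)
  also have "card {cls E a, cls E b} \<le> 2" by (simp add: card_insert_le_m1)
  finally have "card ?S \<le> card (?S - {cls E a, cls E b}) + 2" by simp
  moreover have "card ((?S - {cls E a, cls E b}) \<union> {cls (insert e E) a}) = card (?S - {cls E a, cls E b}) + 1"
    using notin fS by simp
  moreover have "card ((?S - {cls E a, cls E b}) \<union> {cls (insert e E) a}) \<le> card ?S'"
    using card_mono[OF fS(2) sub] .
  moreover have "card (insert e E) = card E + 1" using insert by simp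
  ultimately show ?case using IH by linarith
qed



lemma tree_cut:
  assumes T: "is_tree V E" and e: "e \<in> E" "e = {a, b}"
  shows "(a, b) \<notin> (erel (E - {e}))\<^sup>*"
proof
  assume ab: "(a, b) \<in> (erel (E - {e}))\<^sup>*"
  have fV: "finite V" and Vne: "V \<noteq> {}" and edges: "\<forall>e\<in>E. e \<subseteq> V \<and> card e = 2"
    and conn: "\<forall>x\<in>V. \<forall>y\<in>V. (x, y) \<in> (erel E)\<^sup>*" and cE: "card E = card V - 1"
    using T unfolding is_tree_def erel_def by auto
  have "E \<subseteq> Pow V" using edges by auto
  hence fE: "finite E" using fV by (meson finite_Pow_iff finite_subset)
  have "erel E \<subseteq> (erel (E - {e}))\<^sup>*"
  proof
    fix p assume "p \<in> erel E"
    then obtain u v where p: "p = (u, v)" "{u, v} \<in> E" by (auto simp: erel_def)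
    show "p \<in> (erel (E - {e}))\<^sup>*"
    proof (cases "{u, v} = e")
      case True
      hence "(u = a \<and> v = b) \<or> (u = b \<and> v = a)" using e by (auto simp: doubleton_eq_iff)
      then show ?thesis using ab rt_sym p by auto
    next
      case False
      hence "(u, v) \<in> erel (E - {e})" using p by (auto simp: erel_def)
      then show ?thesis using p by auto
    qed
  qed
  hence sub: "(erel E)\<^sup>* \<subseteq> (erel (E - {e}))\<^sup>*" by (rule rtrancl_subset_rtrancl)
  have "e \<subseteq> V" using edges e(1) by blast
  hence aV: "a \<in> V" using e(2) by simp
  have ceq: "cls (E - {e}) ` V = {cls (E - {e}) a}"
  proof -
    have "cls (E - {e}) x = cls (E - {e}) a" if xV: "x \<in> V" for x
    proof -
      have "(a, x) \<in> (erel E)\<^sup>*" using conn aV xV by blast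
      hence "(a, x) \<in> (erel (E - {e}))\<^sup>*" using sub by blast
      thus ?thesis by (rule comp_eq[symmetric])
    qed
    hence "cls (E - {e}) ` V \<subseteq> {cls (E - {e}) a}" by blast
    moreover have "{cls (E - {e}) a} \<subseteq> cls (E - {e}) ` V" using aV by blast
    ultimately show ?thesis by (rule antisym)
  qed
  hence c1: "card (cls (E - {e}) ` V) = 1" by simp
  have edges': "\<forall>e'\<in>E - {e}. e' \<subseteq> V \<and> card e' = 2" using edges by blast
  have cnt: "card V \<le> card (cls (E - {e}) ` V) + card (E - {e})"
    using comp_count[OF finite_Diff[OF fE] fV edges'] .
  have cD: "card (E - {e}) = card E - 1" using e(1) fE by (simp add: card_Diff_singleton)
  have "card V > 0" using fV Vne card_gt_0_iff by blast
  moreover have "card E > 0" using e(1) fE card_gt_0_iff by blast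
  ultimately show False using cnt c1 cD cE by linarith
qed

lemma lin_even: fixes Q :: "nat \<Rightarrow> bool" shows "even (card {j. j < n \<and> Q j \<noteq> Q (Suc j)}) \<longleftrightarrow> (Q 0 = Q n)"
proof (induction n)
  case 0 then show ?case by simp
next
  case (Suc n)
  have eq: "{j. j < Suc n \<and> Q j \<noteq> Q (Suc j)} = {j. j < n \<and> Q j \<noteq> Q (Suc j)} \<union> (if Q n \<noteq> Q (Suc n) then {n} else {})"
    by (auto simp: less_Suc_eq)
  have f: "finite {j. j < n \<and> Q j \<noteq> Q (Suc j)}" by simp
  show ?case
  proof (cases "Q n \<noteq> Q (Suc n)")
    case True
    hence "card {j. j < Suc n \<and> Q j \<noteq> Q (Suc j)} = Suc (card {j. j < n \<and> Q j \<noteq> Q (Suc j)})"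
      using eq f by simp
    then show ?thesis using Suc True by (cases "Q 0"; cases "Q n") auto
  next
    case False
    then show ?thesis using Suc eq by (cases "Q 0"; cases "Q n") auto
  qed
qed

lemma cyc_even:
  fixes Q :: "nat \<Rightarrow> bool"
  assumes "L > 0"
  shows "even (card {j. j < L \<and> Q j \<noteq> Q (Suc j mod L)})"
proof -
  let ?Q = "\<lambda>j. Q (j mod L)"
  have "{j. j < L \<and> Q j \<noteq> Q (Suc j mod L)} = {j. j < L \<and> ?Q j \<noteq> ?Q (Suc j)}" by auto
  moreover have "?Q 0 = ?Q L" by simp
  ultimately show ?thesis using lin_even[of L ?Q] by simp
qed

lemma walk_even:
  assumes W: "W \<noteq> []" and T: "is_tree V (walk_edges W)" and e: "e \<in> walk_edges W"
  shows "even (traversals W e)"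
proof -
  let ?E = "walk_edges W"
  have "card e = 2" using T e unfolding is_tree_def by auto
  then obtain a b where ab: "e = {a, b}" "a \<noteq> b" by (auto simp: card_2_iff)
  define P where "P x = ((a, x) \<in> (erel (?E - {e}))\<^sup>*)" for x
  have Pa: "P a" by (simp add: P_def)
  have Pb: "\<not> P b" using tree_cut[OF T e ab(1)] by (simp add: P_def)
  have key: "(P u \<noteq> P v) \<longleftrightarrow> {u, v} = e" if uv: "{u, v} \<in> ?E" for u v
  proof (cases "{u, v} = e")
    case True
    hence "(u = a \<and> v = b) \<or> (u = b \<and> v = a)" using ab by (auto simp: doubleton_eq_iff)
    then show ?thesis using Pa Pb True by auto
  next
    case False
    hence "(u, v) \<in> erel (?E - {e})" "(v, u) \<in> erel (?E - {e})" using uv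
      by (auto simp: erel_def insert_commute)
    hence "P u = P v" unfolding P_def by (meson rtrancl.rtrancl_into_rtrancl)
    then show ?thesis using False by simp
  qed
  have "{j. j < length W \<and> step_edge W j = e} =
        {j. j < length W \<and> P (W ! j) \<noteq> P (W ! (Suc j mod length W))}"
  proof -
    have "step_edge W j \<in> ?E" if "j < length W" for j
      using that by (simp add: walk_edges_def)
    thus ?thesis using key unfolding step_edge_def by (intro Collect_cong) auto
  qed
  then show ?thesis unfolding traversals_def
    using cyc_even[of "length W" "\<lambda>j. P (W ! j)"] W by simp
qed



lemma sum_trav: "length W = (\<Sum>e\<in>walk_edges W. traversals W e)"
proof -
  have "card {..<length W} = (\<Sum>y\<in>step_edge W ` {..<length W}. card {x\<in>{..<length W}. step_edge W x = y})"
    using sum.image_gen[of "{..<length W}" "\<lambda>_. (1::nat)" "step_edge W"] by simp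
  moreover have "{x\<in>{..<length W}. step_edge W x = y} = {j. j < length W \<and> step_edge W j = y}" for y
    by auto
  ultimately show ?thesis unfolding walk_edges_def traversals_def by simp
qed

lemma sr_facts:
  assumes S: "superreduced m W" and W: "W \<noteq> []"
  shows "(\<forall>e\<in>walk_edges W. 4 \<le> traversals W e \<and> even (traversals W e))"
    "card (walk_edges W) = m - 1" "finite (walk_edges W)"
proof -
  have T: "is_tree {1..m} (walk_edges W)" and ns: "\<forall>e. \<not> simple_edge W e"
    using S W unfolding superreduced_def tree_walk_def by auto
  show "card (walk_edges W) = m - 1" using T unfolding is_tree_def by simp
  show "finite (walk_edges W)" unfolding walk_edges_def by simp
  show "\<forall>e\<in>walk_edges W. 4 \<le> traversals W e \<and> even (traversals W e)"
  proof
    fix e assume e: "e \<in> walk_edges W"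
    have ev: "even (traversals W e)" using walk_even[OF W T e] .
    obtain j where j: "j < length W" "step_edge W j = e" using e unfolding walk_edges_def by auto
    have "traversals W e \<noteq> 0" unfolding traversals_def using j by auto
    moreover have "traversals W e \<noteq> 2" using ns e unfolding simple_edge_def by auto
    ultimately show "4 \<le> traversals W e \<and> even (traversals W e)" using ev by presburger
  qed
qed

lemma part1:
  assumes S: "superreduced m W"
  shows "length W \<le> 4 * walk_excess W \<and> m \<le> walk_excess W + 1"
proof (cases "W = []")
  case True
  then show ?thesis using S unfolding superreduced_def tree_walk_def walk_excess_def walk_edges_def by auto
next
  case False
  note F = sr_facts[OF S False]
  have "length W = (\<Sum>e\<in>walk_edges W. traversals W e)" by (rule sum_trav)
  also have "\<dots> \<le> (\<Sum>e\<in>walk_edges W. 4 * (traversals W e div 2 - 1))"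
    by (rule sum_mono) (use F(1) in fastforce)
  also have "\<dots> = 4 * walk_excess W" by (simp add: walk_excess_def sum_distrib_left)
  finally have 1: "length W \<le> 4 * walk_excess W" .
  have "m - 1 = (\<Sum>e\<in>walk_edges W. 1)" using F by simp
  also have "\<dots> \<le> walk_excess W" unfolding walk_excess_def
    by (rule sum_mono) (use F(1) in fastforce)
  finally show ?thesis using 1 by simp
qed

lemma len_lower:
  assumes S: "superreduced m W"
  shows "4 * (m - 1) \<le> length W"
proof (cases "W = []")
  case True
  then show ?thesis using S unfolding superreduced_def tree_walk_def by auto
next
  case False
  note F = sr_facts[OF S False]
  have "4 * (m - 1) = (\<Sum>e\<in>walk_edges W. 4)" using F by simp
  also have "\<dots> \<le> (\<Sum>e\<in>walk_edges W. traversals W e)"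
    by (rule sum_mono) (use F(1) in fastforce)
  also have "\<dots> = length W" by (rule sum_trav[symmetric])
  finally show ?thesis .
qed

lemma finite_sr: "finite {W. superreduced m W \<and> length W = L}"
proof (rule finite_subset)
  show "{W. superreduced m W \<and> length W = L} \<subseteq> {xs. set xs \<subseteq> {0..m} \<and> length xs = L}"
    unfolding superreduced_def tree_walk_def by auto
  show "finite {xs. set xs \<subseteq> {0..m} \<and> length xs = (L::nat)}"
    by (rule finite_lists_length_eq) simp
qed



definition starw :: "nat \<Rightarrow> nat" where "starw j = (if even j then 1 else j div 4 + 2)"

lemma witness:
  assumes k: "k \<ge> 1"
  shows "superreduced (k + 1) (map starw [0..<4 * k])"
proof -
  define W where "W = map starw [0..<4 * k]"
  have len: "length W = 4 * k" by (simp add: W_def)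
  have nth: "j < 4 * k \<Longrightarrow> W ! j = starw j" for j by (simp add: W_def)
  have st: "step_edge W j = {1, j div 4 + 2}" if j: "j < 4 * k" for j
  proof (cases "even j")
    case True
    hence "Suc j < 4 * k" using j by presburger
    moreover have "Suc j div 4 = j div 4" using True by presburger
    ultimately show ?thesis using True j unfolding step_edge_def len by (simp add: nth starw_def)
  next
    case False
    have "even (Suc j mod (4 * k))"
      by (cases "Suc j < 4 * k") (use False j in \<open>auto simp: mod_if\<close>)
    moreover have "Suc j mod (4 * k) < 4 * k" using k by simp
    ultimately show ?thesis using False j unfolding step_edge_def len by (simp add: nth starw_def insert_commute)
  qed
  have E: "walk_edges W = (\<lambda>i. {1, i}) ` {2..k + 1}"
  proof -
    have "walk_edges W = (\<lambda>j. {1, j div 4 + 2}) ` {..<4 * k}"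
      unfolding walk_edges_def len using st by auto
    also have "(\<lambda>j. {1, j div 4 + 2}) ` {..<4 * k} = (\<lambda>i. {1, i}) ` ((\<lambda>j. j div 4 + 2) ` {..<4 * k})"
      by (simp add: image_image)
    also have "(\<lambda>j. j div 4 + 2) ` {..<4 * k} = {2..k + 1}"
    proof
      show "(\<lambda>j. j div 4 + 2) ` {..<4 * k} \<subseteq> {2..k + 1}" by auto
      show "{2..k + 1} \<subseteq> (\<lambda>j. j div 4 + 2) ` {..<4 * k}"
      proof
        fix i assume i: "i \<in> {2..k + 1}"
        hence "i = (4 * (i - 2)) div 4 + 2" "4 * (i - 2) < 4 * k" by auto
        thus "i \<in> (\<lambda>j. j div 4 + 2) ` {..<4 * k}" by blast
      qed
    qed
    finally show ?thesis .
  qed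
  have SW: "set W = {1..k + 1}"
  proof -
    have "set W = starw ` {..<4 * k}" by (auto simp: W_def)
    also have "\<dots> = {1..k + 1}"
    proof
      show "starw ` {..<4 * k} \<subseteq> {1..k + 1}" by (auto simp: starw_def)
      show "{1..k + 1} \<subseteq> starw ` {..<4 * k}"
      proof
        fix i assume i: "i \<in> {1..k + 1}"
        show "i \<in> starw ` {..<4 * k}"
        proof (cases "i = 1")
          case True
          hence "i = starw 0" "0 < 4 * k" using k by (auto simp: starw_def)
          thus ?thesis by blast
        next
          case False
          hence "i = starw (4 * (i - 2) + 1)" "4 * (i - 2) + 1 < 4 * k" using i by (auto simp: starw_def)
          thus ?thesis by blast
        qed
      qed
    qed
    finally show ?thesis .
  qed
  have inj: "inj_on (\<lambda>i. {1::nat, i}) {2..k + 1}"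
    by (auto simp: inj_on_def doubleton_eq_iff)
  have tree: "is_tree {1..k + 1} (walk_edges W)"
    unfolding is_tree_def
  proof (intro conjI ballI)
    show "finite {1..k + 1}" "{1..k + 1} \<noteq> {}" by auto
  next
    fix e assume "e \<in> walk_edges W"
    then obtain i where "i \<in> {2..k+1}" "e = {1, i}" using E by auto
    thus "e \<subseteq> {1..k + 1}" "card e = 2" by auto
  next
    fix x y assume x: "x \<in> {1..k + 1}" and y: "y \<in> {1..k + 1}"
    have to1: "(z, 1) \<in> {(a, b). {a, b} \<in> walk_edges W}\<^sup>*" 
      and from1: "(1, z) \<in> {(a, b). {a, b} \<in> walk_edges W}\<^sup>*" if z: "z \<in> {1..k + 1}" for z
    proof -
      have "z = 1 \<or> {1, z} \<in> walk_edges W" using z E by (cases "z = 1") auto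
      thus "(z, 1) \<in> {(a, b). {a, b} \<in> walk_edges W}\<^sup>*" "(1, z) \<in> {(a, b). {a, b} \<in> walk_edges W}\<^sup>*"
        by (auto simp: insert_commute)
    qed
    show "(x, y) \<in> {(a, b). {a, b} \<in> walk_edges W}\<^sup>*"
      using to1[OF x] from1[OF y] by (rule rtrancl_trans)
  next
    show "card (walk_edges W) = card {1..k + 1} - 1"
      using E inj by (simp add: card_image)
  qed
  have trav: "traversals W e = 4" if e: "e \<in> walk_edges W" for e
  proof -
    obtain i where i: "i \<in> {2..k+1}" "e = {1, i}" using E e by auto
    have "{j. j < length W \<and> step_edge W j = e} = {4 * (i - 2)..<4 * (i - 2) + 4}"
    proof -
      have "j < length W \<and> step_edge W j = e \<longleftrightarrow> j \<in> {4 * (i - 2)..<4 * (i - 2) + 4}" for j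
      proof
        assume "j < length W \<and> step_edge W j = e"
        hence "j div 4 + 2 = i" using st len i by (auto simp: doubleton_eq_iff)
        thus "j \<in> {4 * (i - 2)..<4 * (i - 2) + 4}" by auto
      next
        assume j: "j \<in> {4 * (i - 2)..<4 * (i - 2) + 4}"
        hence "j div 4 + 2 = i" "j < length W" using i len by auto
        thus "j < length W \<and> step_edge W j = e" using st len i by auto
      qed
      thus ?thesis by blast
    qed
    thus ?thesis unfolding traversals_def by simp
  qed
  have "W \<noteq> []" using len k by auto
  hence "superreduced (k + 1) W"
    unfolding superreduced_def tree_walk_def simple_edge_def using SW tree trav by auto
  thus ?thesis by (simp add: W_def)
qed

lemma s_top_pos: "s_count (k + 1) (4 * k) > 0"
proof (cases "k = 0")
  case True
  have "superreduced 1 []" unfolding superreduced_def tree_walk_def simple_edge_def walk_edges_def by simp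
  hence "[] \<in> {W. superreduced 1 W \<and> length W = 0}" by simp
  then show ?thesis using True finite_sr unfolding s_count_def
    by (metis card_gt_0_iff empty_iff add_0 mult_0_right)
next
  case False
  hence "map starw [0..<4 * k] \<in> {W. superreduced (k + 1) W \<and> length W = 4 * k}" using witness by simp
  then show ?thesis using finite_sr unfolding s_count_def by (metis card_gt_0_iff empty_iff)
qed



lemma S_nth: "S_gf \<xi> $ l = (if \<xi> \<le> l + 1
       then monom (real (s_count (l + 1 - \<xi>) (2 * l)) / fact (l + 1 - \<xi>)) (l + 1 - \<xi>) else 0)"
  by (simp add: S_gf_def)

lemma s_zero: assumes "2 * \<xi> < l" "\<xi> \<le> l + 1" shows "s_count (l + 1 - \<xi>) (2 * l) = 0"
proof (rule ccontr)
  assume "s_count (l + 1 - \<xi>) (2 * l) \<noteq> 0"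
  then obtain W where "superreduced (l + 1 - \<xi>) W" "length W = 2 * l"
    unfolding s_count_def by (metis (mono_tags, lifting) card.empty empty_Collect_eq)
  hence "4 * (l + 1 - \<xi> - 1) \<le> 2 * l" using len_lower by metis
  thus False using assms by linarith
qed

lemma S_zero: "2 * \<xi> < l \<Longrightarrow> S_gf \<xi> $ l = 0"
  using s_zero[of \<xi> l] by (simp add: S_nth)

lemma S_deg: "degree (S_gf \<xi> $ l) \<le> \<xi> + 1"
proof (cases "2 * \<xi> < l")
  case True then show ?thesis by (simp add: S_zero)
next
  case False
  have "degree (S_gf \<xi> $ l) \<le> l + 1 - \<xi>" unfolding S_nth by (simp add: degree_monom_le)
  with False show ?thesis by linarith
qed

lemma S_top: "degree (S_gf \<xi> $ (2 * \<xi>)) = \<xi> + 1"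
proof -
  have "2 * \<xi> + 1 - \<xi> = \<xi> + 1" by simp
  moreover have "s_count (\<xi> + 1) (2 * (2 * \<xi>)) > 0" using s_top_pos[of \<xi>] by (simp add: mult.assoc)
  ultimately show ?thesis unfolding S_nth by (simp add: degree_monom_eq)
qed

theorem proposition2:
  shows "(\<forall>m W. superreduced m W \<longrightarrow>
            length W \<le> 4 * walk_excess W \<and> m \<le> walk_excess W + 1) \<and>
         (\<forall>\<xi>. \<exists>p :: real poly poly. S_gf \<xi> = fps_of_poly p \<and>
            degree p = 2 * \<xi> \<and>
            (\<forall>i. degree (coeff p i) \<le> \<xi> + 1) \<and>
            (\<exists>i. degree (coeff p i) = \<xi> + 1))"
proof (intro conjI allI impI)
  fix m W assume "superreduced m W"
  thus "length W \<le> 4 * walk_excess W" "m \<le> walk_excess W + 1" using part1 by auto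
next
  fix \<xi> :: nat
  define p where "p = Poly (map (\<lambda>l. S_gf \<xi> $ l) [0..<2 * \<xi> + 1])"
  have cp: "coeff p i = S_gf \<xi> $ i" for i
    by (cases "i < 2 * \<xi> + 1") (auto simp: p_def nth_default_def S_zero simp del: upt_Suc)
  have "S_gf \<xi> = fps_of_poly p" by (rule fps_ext) (simp add: cp)
  moreover have "degree p = 2 * \<xi>"
  proof (rule antisym)
    show "degree p \<le> 2 * \<xi>" by (rule degree_le) (simp add: cp S_zero)
    have "S_gf \<xi> $ (2 * \<xi>) \<noteq> 0" using S_top[of \<xi>] by auto
    thus "2 * \<xi> \<le> degree p" by (intro le_degree) (simp add: cp)
  qed
  moreover have "\<forall>i. degree (coeff p i) \<le> \<xi> + 1" using S_deg[of \<xi>] by (simp add: cp)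
  moreover have "\<exists>i. degree (coeff p i) = \<xi> + 1" using S_top by (auto simp: cp)
  ultimately show "\<exists>p :: real poly poly. S_gf \<xi> = fps_of_poly p \<and>
            degree p = 2 * \<xi> \<and>
            (\<forall>i. degree (coeff p i) \<le> \<xi> + 1) \<and>
            (\<exists>i. degree (coeff p i) = \<xi> + 1)" by blast
qed


end
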